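(* Assume $\sigma_1(x)=\tfrac12\sigma_1''(0)\,x(x-a_1)$ and $\sigma_2(x)=\tfrac12\sigma_2''(0)\,x(x-a_2)$ with $\sigma_1''(0)\ne0$, $\sigma_2''(0)\ne0$ and real $0<a_1<a_2$. Let $\Lambda_q=q^{-2}\Big[1+\frac{(1-q^{-1})\tau'(0)}{\frac12\sigma_1''(0)}\Big]$ and $y_0=q^{-1}\Big[1-\frac{(1-q^{-1})}{a_1}\frac{\tau(0)}{\frac12\sigma_1''(0)}\Big]$, and assume $0<qy_0<1$ and $0<q^2\Lambda_q<1$. Put $b=a_1$ and $$\rho(x)=|x|^{\alpha}\frac{(qx/b;q)_\infty}{(x/a_2;q)_\infty},\qquad q^{\alpha}=\frac{q^{-2}\sigma_2''(0)a_2}{\sigma_1''(0)b}.$$ Then there exist polynomials $P_n$, $n\in\mathbb{N}_0$, with $P_n$ of degree $n$ a solution of the q-EHT with $\lambda=\lambda_n$, and nonzero constants $d_n^2$, such that for all $m,n\in\mathbb{N}_0$ $$\int_0^{b}P_n(x)P_m(x)\rho(x)\,d_qx=d_n^2\delta_{mn},$$ i.e. orthogonality with respect to $\rho$ supported on $\{q^kb\}_{k\in\mathbb{N}_0}$.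
   Context: Throughout $0<q<1$. For a function $y$ and $\zeta\in\{q,q^{-1}\}$, $D_\zeta y(x)=\frac{y(x)-y(\zeta x)}{(1-\zeta)x}$ for $x\ne0$ and $D_\zeta y(0)=y'(0)$; $[n]_q=\frac{1-q^n}{1-q}$. Let $\sigma_1$ be a real polynomial of degree at most two, $\tau(x)=\tau'(0)x+\tau(0)$ a real polynomial with $\tau'(0)\ne0$, and $\sigma_2(x):=q[\sigma_1(x)+(1-q^{-1})x\tau(x)]$. The q-EHT with parameter $n$ is $\sigma_1(x)D_{q^{-1}}D_qy(x)+\tau(x)D_qy(x)+\lambda_ny(x)=0$, $\lambda_n=-[n]_q\big(\tau'(0)+\tfrac12[n-1]_{q^{-1}}\sigma_1''(0)\big)$. $(\beta;q)_\infty=\prod_{k\ge0}(1-\beta q^k)$. For $q^\alpha=c$ ($c\ne0$), $\alpha$ is any complex number with $e^{\alpha\ln q}=c$ and $|x|^\alpha:=e^{\alpha\ln|x|}$. For $b>0$, $\int_0^b f(x)\,d_qx=(1-q)b\sum_{j\ge0}q^jf(q^jb)$. *)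

theory Defs
  imports "HOL-Analysis.Analysis" "HOL-Computational_Algebra.Polynomial"
begin

definition qD :: "real \<Rightarrow> (real \<Rightarrow> real) \<Rightarrow> real \<Rightarrow> real" where
  "qD \<zeta> y x = (if x = 0 then deriv y 0 else (y x - y (\<zeta> * x)) / ((1 - \<zeta>) * x))"

definition qnum :: "real \<Rightarrow> int \<Rightarrow> real" where
  "qnum q k = (1 - q powi k) / (1 - q)"

definition qpoch_inf :: "real \<Rightarrow> real \<Rightarrow> real" where
  "qpoch_inf \<beta> q = (\<Prod>k. (1 - \<beta> * q ^ k))"

definition qint_has :: "real \<Rightarrow> real \<Rightarrow> (real \<Rightarrow> complex) \<Rightarrow> complex \<Rightarrow> bool" where
  "qint_has q b f I \<longleftrightarrow>
     (\<lambda>j. complex_of_real ((1 - q) * b * q ^ j) * f (q ^ j * b)) sums I"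

end

theory Submission
  imports Defs
begin


lemma qpoch_conv:
  fixes q \<beta> :: real assumes "0 < q" "q < 1"
  shows "convergent_prod (\<lambda>k. 1 - \<beta> * q ^ k)"
proof (rule abs_convergent_prod_imp_convergent_prod, rule summable_imp_abs_convergent_prod)
  have "summable (\<lambda>k. \<bar>\<beta>\<bar> * q ^ k)"
    using assms by (intro summable_mult summable_geometric) auto
  then show "summable (\<lambda>k. norm (1 - \<beta> * q ^ k - 1))"
    using assms by (simp add: abs_mult power_abs)
qed

lemma qpoch_pos:
  fixes q \<beta> :: real assumes "0 < q" "q < 1" "\<beta> < 1"
  shows "qpoch_inf \<beta> q > 0"
  unfolding qpoch_inf_def
proof (rule less_0_prodinf[OF qpoch_conv[OF assms(1,2)]])
  fix i
  show "0 < 1 - \<beta> * q ^ i"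
  proof (cases "\<beta> \<le> 0")
    case True then show ?thesis using assms by (smt (verit) mult_nonpos_nonneg zero_le_power)
  next
    case False
    have "q ^ i \<le> 1" using assms by (simp add: power_le_one)
    then have "\<beta> * q ^ i \<le> \<beta>" using False by (simp add: mult_left_le)
    then show ?thesis using assms by linarith
  qed
qed

lemma qpoch_shift:
  fixes q \<beta> :: real assumes "0 < q" "q < 1" "\<beta> \<noteq> 1"
  shows "qpoch_inf \<beta> q = (1 - \<beta>) * qpoch_inf (\<beta> * q) q"
proof -
  have "(\<Prod>n. 1 - \<beta> * q ^ Suc n) = qpoch_inf \<beta> q / (1 - \<beta> * q ^ 0)"
    unfolding qpoch_inf_def
    by (rule prodinf_split_head[OF qpoch_conv[OF assms(1,2)]]) (use assms in auto)
  moreover have "(\<lambda>n. 1 - \<beta> * q ^ Suc n) = (\<lambda>n. 1 - \<beta> * q * q ^ n)" by (simp add: mult.assoc)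
  ultimately show ?thesis using assms unfolding qpoch_inf_def by (simp add: field_simps)
qed




definition qn :: "real \<Rightarrow> nat \<Rightarrow> real" where "qn z k = (1 - z ^ k) / (1 - z)"

definition dqp :: "real \<Rightarrow> real poly \<Rightarrow> real poly" where
  "dqp z p = Abs_poly (\<lambda>i. qn z (Suc i) * coeff p (Suc i))"

lemma coeff_dqp: "coeff (dqp z p) i = qn z (Suc i) * coeff p (Suc i)"
proof -
  have "coeff (dqp z p) = (\<lambda>i. qn z (Suc i) * coeff p (Suc i))"
    unfolding dqp_def by (rule coeff_Abs_poly[where n="degree p"]) (simp add: coeff_eq_0)
  then show ?thesis by simp
qed

lemma qn_Suc: "z \<noteq> 1 \<Longrightarrow> qn z (Suc i) = 1 + z * qn z i"
  unfolding qn_def by (simp add: field_simps)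

lemma qn_0[simp]: "qn z 0 = 0" by (simp add: qn_def)

lemma dqp_pCons: "z \<noteq> 1 \<Longrightarrow> dqp z (pCons a p) = p + smult z (pCons 0 (dqp z p))"
  by (rule poly_eqI) (auto simp: coeff_dqp coeff_pCons qn_Suc algebra_simps split: nat.split)

lemma dqp_poly: "z \<noteq> 1 \<Longrightarrow> (1 - z) * x * poly (dqp z p) x = poly p x - poly p (z * x)"
proof (induction p)
  case 0
  then show ?case by (simp add: coeff_dqp poly_eqI[of "dqp z 0" 0])
next
  case (pCons a p)
  then have "(1 - z) * x * poly (dqp z p) x = poly p x - poly p (z * x)" by simp
  then have "x * z * ((1 - z) * x * poly (dqp z p) x) = x * z * (poly p x - poly p (z * x))" by simp
  then show ?case using pCons by (simp add: dqp_pCons algebra_simps)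
qed

lemma qD_poly: "z \<noteq> 1 \<Longrightarrow> qD z (poly p) = poly (dqp z p)"
proof
  fix x assume z: "z \<noteq> 1"
  show "qD z (poly p) x = poly (dqp z p) x"
  proof (cases "x = 0")
    case True
    have "deriv (poly p) 0 = poly (pderiv p) 0"
      by (rule DERIV_imp_deriv) (rule poly_DERIV)
    then show ?thesis using True z
      by (simp add: qD_def poly_0_coeff_0 coeff_pderiv coeff_dqp qn_def)
  next
    case False
    then show ?thesis using dqp_poly[OF z, of x p] z
      by (simp add: qD_def field_simps)
  qed
qed

definition Lop :: "real \<Rightarrow> real \<Rightarrow> real \<Rightarrow> real \<Rightarrow> real \<Rightarrow> real poly \<Rightarrow> real poly" where
  "Lop q s1 a1 t1 t0 p = [:0, -(s1/2)*a1, s1/2:] * dqp (1/q) (dqp q p) + [:t0, t1:] * dqp q p"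

definition mu :: "real \<Rightarrow> real \<Rightarrow> real \<Rightarrow> nat \<Rightarrow> real" where
  "mu q s1 t1 n = qn q n * (t1 + s1/2 * qn (1/q) (n-1))"

lemma coeff_Lop: "coeff (Lop q s1 a1 t1 t0 p) n = mu q s1 t1 n * coeff p n
   + ((-(s1/2)*a1) * qn (1/q) n + t0) * qn q (Suc n) * coeff p (Suc n)"
  by (cases n; cases "n - 1") (auto simp: Lop_def mu_def coeff_dqp coeff_pCons algebra_simps split: nat.split)




primrec Kop :: "(real poly \<Rightarrow> real poly) \<Rightarrow> (nat \<Rightarrow> real) \<Rightarrow> nat \<Rightarrow> real poly \<Rightarrow> real poly" where
  "Kop L m 0 p = p"
| "Kop L m (Suc k) p = Kop L m k (L p - smult (m k) p)"

lemma eigen_exists: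
  fixes L :: "real poly \<Rightarrow> real poly"
  assumes cL: "\<And>p n. coeff (L p) n = m n * coeff p n + B n * coeff p (Suc n)"
    and dist: "\<And>j. j < n \<Longrightarrow> m j \<noteq> m n"
  shows "\<exists>P. degree P = n \<and> P \<noteq> 0 \<and> L P = smult (m n) P"
proof -
  have lin: "L (p - smult c r) = L p - smult c (L r)" for p r c
    by (rule poly_eqI) (simp add: cL algebra_simps)
  have comm: "L (L p - smult a p) - smult b (L p - smult a p) = L (L p - smult b p) - smult a (L p - smult b p)" for p a b
    by (simp add: lin) (rule poly_eqI, simp add: algebra_simps)
  have Vstep: "\<forall>i\<ge>k. coeff (L p - smult (m k) p) i = 0" if "\<forall>i\<ge>Suc k. coeff p i = 0" for k p
  proof (intro allI impI)
    fix i assume "k \<le> i"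
    then show "coeff (L p - smult (m k) p) i = 0"
      using that by (cases "i = k") (auto simp: cL)
  qed
  have kill: "Kop L m k p = 0" if "\<forall>i\<ge>k. coeff p i = 0" for k p
    using that
  proof (induction k arbitrary: p)
    case 0 then show ?case by (simp add: poly_eqI)
  next
    case (Suc k) then show ?case using Vstep by simp
  qed
  have Kcomm: "Kop L m k (L p - smult c p) = L (Kop L m k p) - smult c (Kop L m k p)" for k p c
  proof (induction k arbitrary: p)
    case 0 then show ?case by simp
  next
    case (Suc k)
    have "Kop L m (Suc k) (L p - smult c p) = Kop L m k (L (L p - smult c p) - smult (m k) (L p - smult c p))"
      by simp
    also have "\<dots> = Kop L m k (L (L p - smult (m k) p) - smult c (L p - smult (m k) p))"
      by (simp only: comm)
    also have "\<dots> = L (Kop L m (Suc k) p) - smult c (Kop L m (Suc k) p)"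
      using Suc by simp
    finally show ?case .
  qed
  have coeffK: "(\<forall>i\<ge>Suc n. coeff (Kop L m k p) i = 0) \<and> coeff (Kop L m k p) n = (\<Prod>j<k. (m n - m j)) * coeff p n"
    if "\<forall>i\<ge>Suc n. coeff p i = 0" for k p
    using that
  proof (induction k arbitrary: p)
    case 0 then show ?case by simp
  next
    case (Suc k)
    let ?r = "L p - smult (m k) p"
    have r1: "\<forall>i\<ge>Suc n. coeff ?r i = 0" using Suc.prems by (simp add: cL)
    have r2: "coeff ?r n = (m n - m k) * coeff p n" using Suc.prems by (simp add: cL algebra_simps)
    show ?case using Suc.IH[OF r1] r2 by (simp add: mult_ac)
  qed
  define P where "P = Kop L m n (monom 1 n)"
  have m1: "\<forall>i\<ge>Suc n. coeff (monom (1::real) n) i = 0" by (simp add: coeff_monom)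
  have cP: "coeff P n = (\<Prod>j<n. (m n - m j))" and vP: "\<forall>i\<ge>Suc n. coeff P i = 0"
    using coeffK[OF m1, of n] by (auto simp: P_def coeff_monom)
  have cPnz: "coeff P n \<noteq> 0" unfolding cP using dist by (auto simp: prod_zero_iff) (metis lessThan_iff)
  have "degree P = n"
  proof (rule antisym)
    show "degree P \<le> n" using vP by (intro degree_le) auto
    show "n \<le> degree P" using cPnz le_degree by blast
  qed
  moreover have "P \<noteq> 0" using cPnz by auto
  moreover have "L P - smult (m n) P = 0"
  proof -
    have "L P - smult (m n) P = Kop L m (Suc n) (monom 1 n)" by (simp add: P_def Kcomm)
    also have "\<dots> = 0" by (rule kill) (simp add: coeff_monom)
    finally show ?thesis .
  qed
  ultimately show ?thesis by auto
qed



lemma aux_c: fixes d Q A w q :: real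
  shows "d \<noteq> 0 \<Longrightarrow> Q \<noteq> 0 \<Longrightarrow> (1-A) * w * q/(2*d) + w/2*(q*(1-Q)/(Q*d)) = w * q/(2*d)*(1/Q - A)"
  by (simp add: field_simps)

lemma mu_formula:
  fixes q s1 t1 A :: real
  assumes q: "0 < q" "q < 1" and A: "A = 1 + (1 - 1/q) * t1 / (s1/2)" and s1: "s1 \<noteq> 0"
  shows "mu q s1 t1 n = s1 * q / (2 * (1-q)^2) * (1 - q^n) * (q / q^n - A)"
proof (cases n)
  case 0 then show ?thesis by (simp add: mu_def)
next
  case (Suc k)
  define Q where "Q = q ^ k"
  have Q: "Q > 0" using q by (simp add: Q_def)
  have qq: "1 - 1/q \<noteq> 0" using q by simp
  have q1: "q - 1 \<noteq> 0" "1 - q \<noteq> 0" using q by auto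
  have t0: "(A - 1) * (s1/2) = (1 - 1/q) * t1" using s1 by (simp add: A)
  have t1: "t1 = (A - 1) * (s1/2) / (1 - 1/q)" using qq t0 by (metis nonzero_mult_div_cancel_left)
  have b: "t1 = (1-A) * s1 * q/(2*(1-q))" unfolding t1 using q q1 by (simp add: field_simps)
  have e1: "(1/q) ^ k = 1 / Q" by (simp add: Q_def power_one_over)
  have a: "(1 - 1/Q)/(1 - 1/q) = q*(1-Q)/(Q*(1-q))" using q Q q1 by (simp add: field_simps)
  have c: "t1 + s1/2*(q*(1-Q)/(Q*(1-q))) = s1 *q/(2*(1-q))*(1/Q - A)"
    unfolding b using q Q q1 by (intro aux_c) auto
  have "mu q s1 t1 n = (1 - q * Q) / (1 - q) * (t1 + s1/2 * ((1 - 1/Q) / (1 - 1/q)))"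
    using Suc by (simp add: mu_def qn_def e1 Q_def)
  also have "\<dots> = (1 - q * Q) / (1 - q) * (s1 *q/(2*(1-q))*(1/Q - A))" by (simp only: a c)
  also have "\<dots> = s1 * q / (2 * (1-q)^2) * (1 - q * Q) * (q / (q * Q) - A)"
    using q Q by (simp add: power2_eq_square mult_ac)
  finally show ?thesis using Suc by (simp add: Q_def)
qed

lemma mu_distinct:
  fixes q s1 t1 A :: real
  assumes q: "0 < q" "q < 1" and A: "A = 1 + (1 - 1/q) * t1 / (s1/2)" and s1: "s1 \<noteq> 0"
    and A1: "A < 1" and jn: "j < n"
  shows "mu q s1 t1 j \<noteq> mu q s1 t1 n"
proof
  assume eq: "mu q s1 t1 j = mu q s1 t1 n"
  define X where "X = q ^ j" define Y where "Y = q ^ n"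
  have X: "0 < X" "X \<le> 1" using q by (auto simp: X_def power_le_one)
  have Y: "0 < Y" "Y < X" using q jn by (auto simp: X_def Y_def power_strict_decreasing)
  have "Y \<le> q ^ 1" unfolding Y_def using q jn by (intro power_decreasing) auto
  then have Yq: "Y \<le> q" by simp
  have "X * Y \<le> Y" using X Y by (simp add: mult_le_cancel_right1)
  then have "X * Y \<le> q" using Yq by linarith
  then have big: "q / (X * Y) \<ge> 1" using X Y by simp
  have c: "s1 * q / (2 * (1-q)^2) \<noteq> 0" using s1 q by simp
  from eq have e: "(1 - X) * (q / X - A) = (1 - Y) * (q / Y - A)"
    using mu_formula[OF q A s1, of j] mu_formula[OF q A s1, of n] c by (simp add: X_def Y_def)
  have "(1 - X) * (q / X - A) - (1 - Y) * (q / Y - A) = (X - Y) * (A - q / (X * Y))"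
    using X Y by (simp add: field_simps)
  then have "(X - Y) * (A - q / (X * Y)) = 0" using e by simp
  then show False using Y big A1 by simp
qed



lemma telescope:
  fixes u \<alpha> \<gamma> F G :: "nat \<Rightarrow> real" and \<mu> \<nu> :: real
  assumes db: "\<And>j. u (Suc j) * \<gamma> (Suc j) = u j * \<alpha> j"
   and F0: "\<mu> * F 0 = \<alpha> 0 * (F 1 - F 0)"
   and FS: "\<And>j. \<mu> * F (Suc j) = \<alpha> (Suc j) * (F (Suc (Suc j)) - F (Suc j)) + \<gamma> (Suc j) * (F j - F (Suc j))"
   and G0: "\<nu> * G 0 = \<alpha> 0 * (G 1 - G 0)"
   and GS: "\<And>j. \<nu> * G (Suc j) = \<alpha> (Suc j) * (G (Suc (Suc j)) - G (Suc j)) + \<gamma> (Suc j) * (G j - G (Suc j))"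
  shows "(\<mu> - \<nu>) * (\<Sum>j<Suc N. u j * F j * G j) = u N * \<alpha> N * (G N * F (Suc N) - F N * G (Suc N))"
proof (induction N)
  case 0
  have "(\<mu> - \<nu>) * (u 0 * F 0 * G 0) = u 0 * (G 0 * (\<mu> * F 0) - F 0 * (\<nu> * G 0))" by (simp add: algebra_simps)
  also have "\<dots> = u 0 * \<alpha> 0 * (G 0 * F 1 - F 0 * G 1)" unfolding F0 G0 by (simp add: algebra_simps)
  finally show ?case by simp
next
  case (Suc N)
  let ?n = "Suc N"
  have "(\<mu> - \<nu>) * (u ?n * F ?n * G ?n) = u ?n * (G ?n * (\<mu> * F ?n) - F ?n * (\<nu> * G ?n))" by (simp add: algebra_simps)
  also have "\<dots> = u ?n * \<alpha> ?n * (G ?n * F (Suc ?n) - F ?n * G (Suc ?n))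
        + u ?n * \<gamma> ?n * (G ?n * F N - F ?n * G N)" unfolding FS GS by (simp add: algebra_simps)
  also have "\<dots> = u ?n * \<alpha> ?n * (G ?n * F (Suc ?n) - F ?n * G (Suc ?n))
        - u N * \<alpha> N * (G N * F (Suc N) - F N * G (Suc N))" unfolding db by (simp add: algebra_simps)
  finally have "(\<mu> - \<nu>) * (u ?n * F ?n * G ?n) = \<dots>" .
  then show ?case using Suc.IH by (simp add: algebra_simps)
qed




lemma orth_limit:
  fixes u F G E :: "nat \<Rightarrow> real"
  assumes sums: "(\<lambda>j. u j * F j * G j) sums S"
   and tele: "\<And>N. (\<mu> - \<nu>) * (\<Sum>j<Suc N. u j * F j * G j) = E N"
   and E0: "E \<longlonglongrightarrow> 0" and ne: "\<mu> \<noteq> \<nu>"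
  shows "S = 0"
proof -
  have "(\<lambda>N. \<Sum>j<N. u j * F j * G j) \<longlonglongrightarrow> S" using sums by (simp add: sums_def)
  then have "(\<lambda>N. \<Sum>j<Suc N. u j * F j * G j) \<longlonglongrightarrow> S" by (rule LIMSEQ_Suc)
  then have "(\<lambda>N. (\<mu> - \<nu>) * (\<Sum>j<Suc N. u j * F j * G j)) \<longlonglongrightarrow> (\<mu> - \<nu>) * S"
    by (intro tendsto_intros)
  then have "E \<longlonglongrightarrow> (\<mu> - \<nu>) * S" unfolding tele by simp
  then have "(\<mu> - \<nu>) * S = 0" using E0 LIMSEQ_unique by blast
  then show ?thesis using ne by simp
qed

lemma aux3:
  fixes q d x hx hy dd f0 f1 f2 s a tt \<mu> :: real
  assumes "q \<noteq> 0" "d \<noteq> 0" "x \<noteq> 0" and dq: "d = 1 - q"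
   and e1: "d*x*hx = f1 - f2" and e2: "d*(x/q)*hy = f0 - f1" and e3: "(1-1/q)*x*dd = hx - hy"
   and e4: "s*x*(x-a)*dd + tt*hx = \<mu>*f1"
  shows "\<mu>*f1 = (s*x*(x-a)*q - d*x*tt)/(d^2*x^2)*(f2-f1) + s*x*(x-a)*q^2/(d^2*x^2)*(f0-f1)"
proof -
  have hx: "hx = (f1-f2)/(d*x)" using e1 assms by (simp add: field_simps)
  have hy: "hy = q*(f0-f1)/(d*x)" using e2 assms by (simp add: field_simps)
  have qq: "1 - 1/q = - d/q" unfolding dq using assms(1) by (simp add: field_simps)
  have dd: "dd = (q*(f2-f1) + q^2*(f0-f1))/(d^2*x^2)"
  proof -
    have "dd = (hx - hy) / ((1-1/q)*x)" using e3 assms by (simp add: qq field_simps)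
    also have "\<dots> = (q*(f2-f1) + q^2*(f0-f1))/(d^2*x^2)"
      unfolding hx hy qq using assms by (simp add: field_simps power2_eq_square)
    finally show ?thesis .
  qed
  have "\<mu>*f1 = s*x*(x-a)*((q*(f2-f1) + q^2*(f0-f1))/(d^2*x^2)) + tt*((f1-f2)/(d*x))"
    using e4 unfolding dd hx by simp
  also have "\<dots> = (s*x*(x-a)*q - d*x*tt)/(d^2*x^2)*(f2-f1) + s*x*(x-a)*q^2/(d^2*x^2)*(f0-f1)"
    using assms by (simp add: field_simps power2_eq_square)
  finally show ?thesis .
qed




lemma three_term:
  fixes q a1 s1 t1 t0 \<mu> :: real and P :: "real poly" and F al ga :: "nat \<Rightarrow> real"
  assumes q: "0<q" "q<1" and a1: "a1 > 0"
   and eig: "\<And>x. s1/2*x*(x-a1)*poly (dqp (1/q) (dqp q P)) x + (t1*x+t0)*poly (dqp q P) x = \<mu> * poly P x"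
   and F: "F = (\<lambda>j. poly P (q^j*a1))"
   and al: "al = (\<lambda>j. (s1/2*(q^j*a1)*((q^j*a1)-a1)*q - (1-q)*(q^j*a1)*(t1*(q^j*a1)+t0))/((1-q)^2*(q^j*a1)^2))"
   and ga: "ga = (\<lambda>j. s1/2*(q^j*a1)*((q^j*a1)-a1)*q^2/((1-q)^2*(q^j*a1)^2))"
  shows "\<mu> * F 0 = al 0 * (F 1 - F 0)"
    and "\<mu> * F (Suc j) = al (Suc j)*(F (Suc (Suc j)) - F (Suc j)) + ga (Suc j)*(F j - F (Suc j))"
proof -
  have q1: "q \<noteq> 1" "1/q \<noteq> 1" "1 - q \<noteq> 0" using q by auto
  let ?h = "poly (dqp q P)"
  have hq: "\<And>y. (1-q)*y*?h y = poly P y - poly P (q*y)" using dqp_poly[OF q1(1)] by simp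
  have h0: "(1-q)*a1*?h a1 = F 0 - F 1" using hq[of a1] by (simp add: F)
  have e0: "(t1*a1+t0)*?h a1 = \<mu> * F 0" using eig[of a1] by (simp add: F)
  have g: "d \<noteq> 0 \<Longrightarrow> a \<noteq> 0 \<Longrightarrow> (s*a*(a-a)*q - d*a*tt)/(d^2*a^2) = -tt/(d*a)" for d a s tt :: real
    by (simp add: power2_eq_square)
  have al0: "al 0 = -(t1*a1+t0)/((1-q)*a1)" unfolding al using g[of "1-q" a1] q1 a1 by (simp, simp add: field_simps)
  have hh: "?h a1 = (F 0 - F 1)/((1-q)*a1)" using h0 q1 a1 by (simp add: field_simps)
  show "\<mu> * F 0 = al 0 * (F 1 - F 0)"
    using e0 unfolding al0 hh by (simp add: field_simps)
  define x where "x = q^Suc j*a1"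
  define y where "y = q^j*a1"
  have xy: "x/q = y" "(1/q)*x = y" "q*x = q^Suc (Suc j)*a1" using q by (auto simp: x_def y_def)
  have x0: "x \<noteq> 0" using q a1 by (simp add: x_def)
  have Fx: "F (Suc j) = poly P x" "F (Suc (Suc j)) = poly P (q*x)" "F j = poly P y" "q * y = x"
    using xy(3) by (simp_all add: F x_def y_def mult.assoc)
  have e1: "(1-q)*x*?h x = F (Suc j) - F (Suc (Suc j))" using hq[of x] Fx by simp
  have e2: "(1-q)*(x/q)*?h y = F j - F (Suc j)" using hq[of y] Fx unfolding xy(1) by simp
  have e3: "(1-1/q)*x*poly (dqp (1/q) (dqp q P)) x = ?h x - ?h y"
    using dqp_poly[OF q1(2), of x "dqp q P"] xy by simp
  have e4: "s1/2*x*(x-a1)*poly (dqp (1/q) (dqp q P)) x + (t1*x+t0)*?h x = \<mu> * F (Suc j)"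
    using eig[of x] by (simp add: F x_def)
  have "\<mu> * F (Suc j) = (s1/2*x*(x-a1)*q - (1-q)*x*(t1*x+t0))/((1-q)^2*x^2)*(F (Suc (Suc j)) - F (Suc j))
       + s1/2*x*(x-a1)*q^2/((1-q)^2*x^2)*(F j - F (Suc j))"
    by (rule aux3[OF _ q1(3) x0 refl e1 e2 e3 e4]) (use q in simp)
  then show "\<mu> * F (Suc j) = al (Suc j)*(F (Suc (Suc j)) - F (Suc j)) + ga (Suc j)*(F j - F (Suc j))"
    by (simp only: al ga x_def)
qed




lemma aux_db:
  fixes q C s1 s2 a1 a2 x Q r A1 B1 t1 t0 d :: real and j::nat
  assumes q0: "q \<noteq> 0" and d0: "d \<noteq> 0" and x0: "x \<noteq> 0" and a10: "a1 \<noteq> 0" and a20: "a2 \<noteq> 0"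
   and d: "d = 1 - q" and x: "x = Q*a1" and r: "r = a1/a2" and C: "C*(q^2* s1*a1) = s2*a2"
   and sig: "q*(s1/2*x*(x-a1) + (1-1/q)*x*(t1*x+t0)) = s2/2*x*(x-a2)" and B1: "B1 \<noteq> 0" and Qr: "1 - Q*r \<noteq> 0"
  shows "((q*C)^Suc j * (A1/B1)) * (s1/2*(q*x)*((q*x)-a1)*q^2/(d^2*(q*x)^2))
       = ((q*C)^j * (((1-q*Q)*A1)/((1-Q*r)*B1))) * ((s1/2*x*(x-a1)*q - d*x*(t1*x+t0))/(d^2*x^2))"
proof -
  have qq: "q*(1-1/q) = q - 1" using q0 by (simp add: field_simps)
  have num: "s1/2*x*(x-a1)*q - d*x*(t1*x+t0) = s2/2*x*(x-a2)"
  proof -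
    have "s2/2*x*(x-a2) = q*(s1/2*x*(x-a1)) + (q*(1-1/q))*x*(t1*x+t0)" unfolding sig[symmetric] by (simp add: algebra_simps)
    then show ?thesis unfolding qq d by algebra
  qed
  have x2: "x - a2 = -a2*(1-Q*r)" unfolding x r using a20 by (simp add: field_simps)
  have al: "(s1/2*x*(x-a1)*q - d*x*(t1*x+t0))/(d^2*x^2) = -(s2*a2)*(1-Q*r)/(2*d^2*x)"
    unfolding num x2 using x0 d0 by (simp add: power2_eq_square field_simps)
  have ga: "s1/2*(q*x)*((q*x)-a1)*q^2/(d^2*(q*x)^2) = s1*q*(q*Q-1)*a1/(2*d^2*x)"
    using x0 d0 q0 unfolding x by (simp add: power2_eq_square field_simps)
  show ?thesis unfolding al ga C[symmetric] using B1 Qr x0 d0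
    by (simp add: field_simps power2_eq_square)
qed




lemma poly_bound: "\<exists>M. \<forall>x\<in>{0..a}. \<bar>poly p x\<bar> \<le> (M::real)"
proof -
  have "compact (poly p ` {0..a})"
    by (rule compact_continuous_image) (auto intro: continuous_intros)
  then have "bounded (poly p ` {0..a})" by (rule compact_imp_bounded)
  then show ?thesis unfolding bounded_real by auto
qed

lemma grid_in: "0 < q \<Longrightarrow> q < 1 \<Longrightarrow> 0 < a \<Longrightarrow> q^j * a \<in> {0..(a::real)}"
  by (auto simp: mult_le_cancel_right1 power_le_one)

lemma grid_inj: "0 < q \<Longrightarrow> q < 1 \<Longrightarrow> 0 < a \<Longrightarrow> inj (\<lambda>j. q^j * (a::real))"
proof (rule injI)
  fix i j assume q: "0 < q" "q < 1" "0 < a" and e: "q^i * a = q^j * a"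
  then have e': "q^i = q^j" by simp
  show "i = j"
  proof (rule ccontr)
    assume "i \<noteq> j"
    then have "i < j \<or> j < i" by arith
    then show False using e' q power_strict_decreasing[of _ _ q] by (metis less_irrefl)
  qed
qed




lemma aux_num:
  fixes q s1 s2 a1 a2 x t1 t0 d :: real
  assumes q0: "q \<noteq> 0" and d: "d = 1 - q"
   and sig: "q * ((s1 / 2) * x * (x - a1) + (1 - 1 / q) * x * (t1 * x + t0)) = (s2 / 2) * x * (x - a2)"
  shows "s1/2*x*(x-a1)*q - d*x*(t1*x+t0) = s2/2*x*(x-a2)"
proof -
  have qq: "q*(1-1/q) = q - 1" using q0 by (simp add: field_simps)
  have "s2/2*x*(x-a2) = q*(s1/2*x*(x-a1)) + (q*(1-1/q))*x*(t1*x+t0)" unfolding sig[symmetric] by (simp add: algebra_simps)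
  then show ?thesis unfolding qq d by algebra
qed

lemma aux_E:
  fixes d x al s2 a2 hf hg f0 f1 g0 g1 :: real
  assumes "d \<noteq> 0" "x \<noteq> 0" and al: "al = s2/2*(x-a2)/(d^2*x)"
    and ef: "d*x*hf = f0 - f1" and eg: "d*x*hg = g0 - g1"
  shows "al*(g0*f1 - f0*g1) = -(s2/2)/d*(x-a2)*(g0*hf - f0*hg)"
proof -
  have h: "g0*f1 - f0*g1 = -(d*x)*(g0*hf - f0*hg)" using ef eg by algebra
  show ?thesis unfolding al h using assms(1,2) by (simp add: power2_eq_square field_simps)
qed




lemma real_orth:
  fixes q s1 a1 t1 t0 s2 a2 C :: real and P :: "nat \<Rightarrow> real poly" and \<mu> u :: "nat \<Rightarrow> real" and m n :: nat
  assumes q: "0 < q" "q < 1" and a: "0 < a1" "a1 < a2"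
   and sig: "\<forall>x::real. q * ((s1 / 2) * x * (x - a1) + (1 - 1 / q) * x * (t1 * x + t0)) = (s2 / 2) * x * (x - a2)"
   and C: "C*(q^2 * s1 * a1) = s2 * a2" and qC: "0 < q*C" "q*C < 1"
   and eig: "\<And>n x. s1/2*x*(x-a1)*poly (dqp (1/q) (dqp q (P n))) x + (t1*x+t0)*poly (dqp q (P n)) x = \<mu> n * poly (P n) x"
   and dist: "\<And>m n. m \<noteq> n \<Longrightarrow> \<mu> m \<noteq> \<mu> n"
   and nz: "\<And>n. P n \<noteq> 0"
   and u: "u = (\<lambda>j. (q*C)^j * (qpoch_inf (q*(q^j*a1)/a1) q / qpoch_inf ((q^j*a1)/a2) q))"
  shows "(\<lambda>j. u j * poly (P n) (q^j*a1) * poly (P m) (q^j*a1)) sums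
           (if m = n then (\<Sum>j. u j * poly (P n) (q^j*a1) * poly (P n) (q^j*a1)) else 0)"
    and "(\<Sum>j. u j * poly (P n) (q^j*a1) * poly (P n) (q^j*a1)) > 0"
proof -
  define r where "r = a1/a2"
  have r: "0 < r" "r < 1" using a by (auto simp: r_def)
  define Aq where "Aq j = qpoch_inf (q^Suc j) q" for j
  define Bq where "Bq j = qpoch_inf (q^j*r) q" for j
  have uA: "u j = (q*C)^j * (Aq j / Bq j)" for j
    using a by (simp add: u Aq_def Bq_def r_def)
  have qj: "q^j \<le> 1" "q^j > 0" "q^Suc j < 1" for j
    using q by (auto simp: power_le_one simp del: power_Suc intro: power_Suc_less_one)
  have Apos: "Aq j > 0" for j unfolding Aq_def by (rule qpoch_pos) (use q qj in auto)
  have Ale: "Aq j \<le> 1" for j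
    unfolding Aq_def qpoch_inf_def
  proof (rule prodinf_le_const[OF qpoch_conv[OF q]])
    fix N :: nat
    show "(\<Prod>k<N. 1 - q^Suc j * q ^ k) \<le> 1"
    proof (rule prod_le_1)
      fix k assume "k \<in> {..<N}"
      have "q^Suc j * q^k > 0" "q^Suc j * q^k \<le> 1"
        using q qj[of k] qj[of "Suc j"] by (auto intro: mult_le_one)
      then show "0 \<le> 1 - q ^ Suc j * q ^ k \<and> 1 - q ^ Suc j * q ^ k \<le> 1" by auto
    qed
  qed
  have qr: "q^j*r < 1" "q^j * r > 0" for j
    using qj[of j] r by (auto intro: mult_le_one order.strict_trans1[of _ r] simp: mult_le_cancel_right1)
  have Bpos: "Bq j > 0" for j unfolding Bq_def by (rule qpoch_pos) (use q qr in auto)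
  have Ash: "Aq j = (1 - q^Suc j) * Aq (Suc j)" for j
    unfolding Aq_def using qpoch_shift[OF q, of "q^Suc j"] qj[of j] by (simp add: mult.commute)
  have Bsh: "Bq j = (1 - q^j*r) * Bq (Suc j)" for j
    unfolding Bq_def using qpoch_shift[OF q, of "q^j*r"] qr[of j] by (simp add: mult_ac)
  have Bstep: "Bq j \<le> Bq (Suc j)" for j
  proof -
    have "Bq j = (1 - q^j*r) * Bq (Suc j)" by (rule Bsh)
    also have "\<dots> \<le> 1 * Bq (Suc j)" using qr[of j] Bpos[of "Suc j"] by (intro mult_right_mono) auto
    finally show ?thesis by simp
  qed
  have Bmono: "Bq 0 \<le> Bq j" for j
    by (induction j) (use Bstep order_trans in auto)
  have upos: "u j > 0" for j unfolding uA using qC Apos Bpos by auto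
  have ule: "u j \<le> (q*C)^j * (1 / Bq 0)" for j
  proof -
    have "Aq j / Bq j \<le> 1 / Bq 0"
    proof -
      have "Aq j * Bq 0 \<le> 1 * Bq 0" using Ale[of j] Bpos[of 0] by (intro mult_right_mono) auto
      then have "Aq j * Bq 0 \<le> Bq j" using Bmono[of j] by linarith
      then show ?thesis using Bpos[of j] Bpos[of 0] by (simp add: divide_simps)
    qed
    then show ?thesis unfolding uA using qC by (intro mult_left_mono) auto
  qed
  have geo: "summable (\<lambda>j. (q*C)^j * K)" for K
    using qC by (intro summable_mult2 summable_geometric) auto
  have summ: "summable (\<lambda>j. u j * poly f (q^j*a1) * poly g (q^j*a1))" for f g
  proof -
    obtain Mf where Mf: "\<forall>x\<in>{0..a1}. \<bar>poly f x\<bar> \<le> Mf" using poly_bound by blast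
    obtain Mg where Mg: "\<forall>x\<in>{0..a1}. \<bar>poly g x\<bar> \<le> Mg" using poly_bound by blast
    show ?thesis
    proof (rule summable_comparison_test[OF _ geo[of "(1 / Bq 0) * (Mf * Mg)"]], intro exI allI impI)
      fix j :: nat
      have xin: "q^j*a1 \<in> {0..a1}" using grid_in q a by blast
      have m1: "\<bar>poly f (q^j*a1)\<bar> * \<bar>poly g (q^j*a1)\<bar> \<le> Mf * Mg"
        by (rule mult_mono) (use Mf Mg xin in auto)
      have m2: "\<bar>u j\<bar> \<le> (q*C)^j * (1 / Bq 0)" using ule upos by (simp add: less_imp_le)
      have "\<bar>u j\<bar> * (\<bar>poly f (q^j*a1)\<bar> * \<bar>poly g (q^j*a1)\<bar>) \<le> ((q*C)^j * (1 / Bq 0)) * (Mf * Mg)"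
        by (rule mult_mono[OF m2 m1]) (use qC Bpos[of 0] in auto)
      then show "norm (u j * poly f (q^j*a1) * poly g (q^j*a1)) \<le> (q*C)^j * ((1 / Bq 0) * (Mf * Mg))"
        by (simp add: abs_mult mult_ac)
    qed
  qed
  have usum: "summable u"
    by (rule summable_comparison_test[OF _ geo[of "1 / Bq 0"]]) (use ule upos in \<open>auto intro!: exI[of _ 0] simp: less_imp_le\<close>)
  have u0: "u \<longlonglongrightarrow> 0" by (rule summable_LIMSEQ_zero[OF usum])
  define al where "al = (\<lambda>j. (s1/2*(q^j*a1)*((q^j*a1)-a1)*q - (1-q)*(q^j*a1)*(t1*(q^j*a1)+t0))/((1-q)^2*(q^j*a1)^2))"
  define ga where "ga = (\<lambda>j. s1/2*(q^j*a1)*((q^j*a1)-a1)*q^2/((1-q)^2*(q^j*a1)^2))"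
  define F where "F = (\<lambda>n j. poly (P n) (q^j*a1))"
  have TT0: "\<mu> k * F k 0 = al 0 * (F k 1 - F k 0)" for k
    using three_term(1)[OF q a(1) eig refl al_def ga_def] by (simp add: F_def)
  have TTS: "\<mu> k * F k (Suc j) = al (Suc j)*(F k (Suc (Suc j)) - F k (Suc j)) + ga (Suc j)*(F k j - F k (Suc j))" for k j
    using three_term(2)[OF q a(1) eig refl al_def ga_def] by (simp add: F_def)
  have db: "u (Suc j) * ga (Suc j) = u j * al j" for j
  proof -
    have e1: "u (Suc j) = (q*C)^Suc j * (Aq (Suc j) / Bq (Suc j))" by (rule uA)
    have e2: "u j = (q*C)^j * (((1-q*q^j)*Aq (Suc j))/((1-q^j*r)*Bq (Suc j)))"
      unfolding uA by (simp add: Ash[of j] Bsh[of j])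
    have e3: "ga (Suc j) = s1/2*(q*(q^j*a1))*((q*(q^j*a1))-a1)*q^2/((1-q)^2*(q*(q^j*a1))^2)"
      by (simp add: ga_def mult.assoc)
    have "(q*C)^Suc j * (Aq (Suc j) / Bq (Suc j)) * (s1/2*(q*(q^j*a1))*((q*(q^j*a1))-a1)*q^2/((1-q)^2*(q*(q^j*a1))^2))
       = ((q*C)^j * (((1-q*q^j)*Aq (Suc j))/((1-q^j*r)*Bq (Suc j)))) * ((s1/2*(q^j*a1)*((q^j*a1)-a1)*q - (1-q)*(q^j*a1)*(t1*(q^j*a1)+t0))/((1-q)^2*(q^j*a1)^2))"
      by (rule aux_db[where ?a2.0=a2 and ?s2.0=s2]) (use q a qj[of j] qr[of j] Bpos[of "Suc j"] sig C in \<open>auto simp: r_def\<close>)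
    then show ?thesis unfolding e1 e2 e3 al_def by simp
  qed
  have alx: "al j = s2/2*((q^j*a1)-a2)/((1-q)^2*(q^j*a1))" for j
  proof -
    have h: "s1/2*(q^j*a1)*((q^j*a1)-a1)*q - (1-q)*(q^j*a1)*(t1*(q^j*a1)+t0) = s2/2*(q^j*a1)*((q^j*a1)-a2)"
      by (rule aux_num) (use q sig in auto)
    have g: "z \<noteq> 0 \<Longrightarrow> (k*z*y)/(D*z^2) = k*y/(D*z)" for k z y D :: real
      by (cases "D = 0") (auto simp: power2_eq_square field_simps)
    have "q^j*a1 \<noteq> 0" using q a by simp
    then show ?thesis unfolding al_def h by (rule g)
  qed
  show "(\<lambda>j. u j * poly (P n) (q^j*a1) * poly (P m) (q^j*a1)) sums
           (if m = n then (\<Sum>j. u j * poly (P n) (q^j*a1) * poly (P n) (q^j*a1)) else 0)"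
  proof (cases "m = n")
    case True then show ?thesis using summable_sums[OF summ] by simp
  next
    case False
    define S where "S = (\<Sum>j. u j * poly (P n) (q^j*a1) * poly (P m) (q^j*a1))"
    have sS: "(\<lambda>j. u j * F n j * F m j) sums S" unfolding S_def F_def by (rule summable_sums[OF summ])
    define E where "E = (\<lambda>N. u N * al N * (F m N * F n (Suc N) - F n N * F m (Suc N)))"
    have tele: "(\<mu> n - \<mu> m) * (\<Sum>j<Suc N. u j * F n j * F m j) = E N" for N
      unfolding E_def by (rule telescope[OF db TT0 TTS TT0 TTS])
    define cc where "cc = -(s2/2)/(1-q)"
    define W where "W = smult cc ([:-a2,1:] * (P m * dqp q (P n) - P n * dqp q (P m)))"
    obtain MW where MW: "\<forall>x\<in>{0..a1}. \<bar>poly W x\<bar> \<le> MW" using poly_bound by blast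
    have EW: "E N = u N * poly W (q^N*a1)" for N
    proof -
      have hq: "(1-q)*y*poly (dqp q p) y = poly p y - poly p (q*y)" for y p
        using dqp_poly[of q] q by simp
      have qx: "q*(q^N*a1) = q^Suc N*a1" by simp
      have hE: "al N * (F m N * F n (Suc N) - F n N * F m (Suc N))
          = cc*((q^N*a1)-a2)*(F m N * poly (dqp q (P n)) (q^N*a1) - F n N * poly (dqp q (P m)) (q^N*a1))"
        unfolding cc_def by (rule aux_E[OF _ _ alx]) (use q a hq[of "q^N*a1"] in \<open>auto simp: F_def qx\<close>)
      have pW: "poly W (q^N*a1) = cc*((q^N*a1)-a2)*(F m N * poly (dqp q (P n)) (q^N*a1) - F n N * poly (dqp q (P m)) (q^N*a1))"
        unfolding W_def F_def by (simp add: algebra_simps)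
      have "E N = u N * (al N * (F m N * F n (Suc N) - F n N * F m (Suc N)))"
        unfolding E_def by (simp only: mult.assoc)
      then show ?thesis unfolding hE pW .
    qed
    have E0: "E \<longlonglongrightarrow> 0"
    proof (rule tendsto_0_le[OF u0, of _ MW], intro always_eventually allI)
      fix N
      have "\<bar>poly W (q^N*a1)\<bar> \<le> MW" using MW grid_in q a by blast
      then show "norm (E N) \<le> norm (u N) * MW" unfolding EW using upos[of N]
        by (simp add: abs_mult mult_left_mono less_imp_le)
    qed
    have "S = 0" by (rule orth_limit[OF sS tele E0 dist[OF False[symmetric]]])
    then show ?thesis using summable_sums[OF summ, of "P n" "P m"] False by (simp add: S_def)
  qed
  show "(\<Sum>j. u j * poly (P n) (q^j*a1) * poly (P n) (q^j*a1)) > 0"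
  proof -
    obtain i where i: "poly (P n) (q^i*a1) \<noteq> 0"
    proof (rule ccontr)
      assume "\<not> thesis"
      then have z: "\<forall>i. poly (P n) (q^i*a1) = 0" using that by blast
      have "range (\<lambda>j. q^j*a1) \<subseteq> {x. poly (P n) x = 0}" using z by auto
      then have "finite (range (\<lambda>j. q^j*a1))" using poly_roots_finite[OF nz[of n]] finite_subset by blast
      then show False using grid_inj[OF q a(1)] finite_imageD by (metis infinite_UNIV_nat)
    qed
    show ?thesis
    proof (rule suminf_pos2[OF summ])
      show "0 \<le> u j * poly (P n) (q^j*a1) * poly (P n) (q^j*a1)" for j
        using upos[of j] by (simp add: mult.assoc less_imp_le)
      show "0 < u i * poly (P n) (q^i*a1) * poly (P n) (q^i*a1)"
        using upos[of i] i by (auto simp: mult.assoc zero_less_mult_iff linorder_neq_iff)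
    qed
  qed
qed




lemma qnum_nat: "qnum z (int n) = qn z n" by (simp add: qnum_def qn_def)

lemma k1_aux: fixes q s1 s2 a1 a2 t1 t0 w :: real
  shows "q*((s1/2)*1*(1-a1) + w*1*(t1*1+t0)) = (s2/2)*1*(1-a2) \<Longrightarrow>
    q*((s1/2)*(-1)*(-1-a1) + w*(-1)*(t1*(-1)+t0)) = (s2/2)*(-1)*(-1-a2) \<Longrightarrow> s2*a2 = q*(s1*a1) - 2*q*w*t0"
proof -
  assume h1: "q*((s1/2)*1*(1-a1) + w*1*(t1*1+t0)) = (s2/2)*1*(1-a2)"
     and h2: "q*((s1/2)*(-1)*(-1-a1) + w*(-1)*(t1*(-1)+t0)) = (s2/2)*(-1)*(-1-a2)"
  have d1: "q*((s1/2)*1*(1-a1) + w*1*(t1*1+t0)) - q*((s1/2)*(-1)*(-1-a1) + w*(-1)*(t1*(-1)+t0))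
     = 2*q*w*t0 - q*(s1*a1)" by (simp add: field_simps)
  have d2: "(s2/2)*1*(1-a2) - (s2/2)*(-1)*(-1-a2) = -(s2*a2)" by (simp add: field_simps)
  show ?thesis using h1 h2 d1 d2 by linarith
qed

lemma qnum_mu: "qnum q (int n) * (t1 + 1 / 2 * qnum (1 / q) (int n - 1) * s1) = mu q s1 t1 n"
proof (cases n)
  case 0 then show ?thesis by (simp add: qnum_def mu_def)
next
  case (Suc k)
  have e: "int n - 1 = int k" using Suc by simp
  show ?thesis unfolding e qnum_nat mu_def using Suc by (simp add: mult_ac)
qed

lemma qnum_mu': "- qnum q (int n) * (t1 + 1 / 2 * qnum (1 / q) (int n - 1) * s1) = - mu q s1 t1 n"
  using qnum_mu[of q n t1 s1] by (simp only: mult_minus_left)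

theorem theorem4p10:
  fixes q s1 a1 t1 t0 s2 a2 :: real
  assumes q: "0 < q" "q < 1"
    and t1: "t1 \<noteq> 0"
    and s1: "s1 \<noteq> 0" and s2: "s2 \<noteq> 0"
    and a: "0 < a1" "a1 < a2"
    and sigma2: "\<forall>x::real. q * ((s1 / 2) * x * (x - a1) + (1 - 1 / q) * x * (t1 * x + t0))
                      = (s2 / 2) * x * (x - a2)"
    and y0: "0 < q * ((1 / q) * (1 - (1 - 1 / q) / a1 * (t0 / (s1 / 2))))"
            "q * ((1 / q) * (1 - (1 - 1 / q) / a1 * (t0 / (s1 / 2)))) < 1"
    and Lam: "0 < q ^ 2 * ((1 / q ^ 2) * (1 + (1 - 1 / q) * t1 / (s1 / 2)))"
             "q ^ 2 * ((1 / q ^ 2) * (1 + (1 - 1 / q) * t1 / (s1 / 2))) < 1"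
  shows "\<forall>\<alpha>::complex.
           exp (\<alpha> * complex_of_real (ln q)) = complex_of_real ((1 / q ^ 2) * s2 * a2 / (s1 * a1)) \<longrightarrow>
           (\<exists>(P :: nat \<Rightarrow> real poly) (dsq :: nat \<Rightarrow> complex).
              (\<forall>n. degree (P n) = n) \<and>
              (\<forall>n. \<forall>x::real.
                  (s1 / 2) * x * (x - a1) * qD (1 / q) (qD q (poly (P n))) x
                  + (t1 * x + t0) * qD q (poly (P n)) x
                  + (- qnum q (int n) * (t1 + 1 / 2 * qnum (1 / q) (int n - 1) * s1)) * poly (P n) x = 0) \<and>
              (\<forall>n. dsq n \<noteq> 0) \<and>
              (\<forall>m n. qint_has q a1
                  (\<lambda>x. complex_of_real (poly (P n) x * poly (P m) x)
                       * (exp (\<alpha> * complex_of_real (ln \<bar>x\<bar>))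
                          * complex_of_real (qpoch_inf (q * x / a1) q / qpoch_inf (x / a2) q)))
                  (if m = n then dsq n else 0)))"
proof (intro allI impI)
  fix \<alpha> :: complex
  define C where "C = (1 / q ^ 2) * s2 * a2 / (s1 * a1)"
  assume h\<alpha>: "exp (\<alpha> * complex_of_real (ln q)) = complex_of_real ((1 / q ^ 2) * s2 * a2 / (s1 * a1))"
  then have hC: "exp (\<alpha> * complex_of_real (ln q)) = complex_of_real C" by (simp add: C_def)
  have q1: "q \<noteq> 1" "1/q \<noteq> 1" using q by auto
  have a10: "a1 \<noteq> 0" using a by simp
  have Ceq: "C*(q^2 * s1 * a1) = s2 * a2" using q s1 a10 by (simp add: C_def field_simps)
  note h1 = sigma2[rule_format, of 1]
  note h2 = sigma2[rule_format, of "-1"]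
  have k1: "s2 * a2 = q*(s1*a1) - 2*q*(1-1/q)*t0" by (rule k1_aux[OF h1 h2])
  have qCy: "q*C = q * ((1 / q) * (1 - (1 - 1 / q) / a1 * (t0 / (s1 / 2))))"
  proof -
    have "q*C = q*((1/q^2)*(s2*a2)/(s1*a1))" by (simp add: C_def mult.assoc)
    also have "\<dots> = q * ((1 / q) * (1 - (1 - 1 / q) / a1 * (t0 / (s1 / 2))))"
      unfolding k1 using q s1 a10 by (simp add: field_simps power2_eq_square)
    finally show ?thesis .
  qed
  have qC: "0 < q*C" "q*C < 1" using y0 qCy by auto
  define A where "A = 1 + (1 - 1/q) * t1 / (s1/2)"
  have A1: "A < 1" using Lam(2) q by (simp add: A_def)
  have ex: "\<forall>n. \<exists>P. degree P = n \<and> P \<noteq> 0 \<and> Lop q s1 a1 t1 t0 P = smult (mu q s1 t1 n) P"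
  proof
    fix n
    show "\<exists>P. degree P = n \<and> P \<noteq> 0 \<and> Lop q s1 a1 t1 t0 P = smult (mu q s1 t1 n) P"
      by (rule eigen_exists[OF coeff_Lop]) (rule mu_distinct[OF q A_def s1 A1])
  qed
  from choice[OF ex] obtain P where P': "\<forall>n. degree (P n) = n \<and> P n \<noteq> 0 \<and> Lop q s1 a1 t1 t0 (P n) = smult (mu q s1 t1 n) (P n)"
    by blast
  have P: "\<And>n. degree (P n) = n" "\<And>n. P n \<noteq> 0"
      "\<And>n. Lop q s1 a1 t1 t0 (P n) = smult (mu q s1 t1 n) (P n)" using P' by auto
  have eig: "s1/2*x*(x-a1)*poly (dqp (1/q) (dqp q (P n))) x + (t1*x+t0)*poly (dqp q (P n)) x = mu q s1 t1 n * poly (P n) x" for n x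
  proof -
    have "poly (Lop q s1 a1 t1 t0 (P n)) x = mu q s1 t1 n * poly (P n) x" using P(3)[of n] by simp
    then show ?thesis by (simp add: Lop_def algebra_simps diff_divide_distrib)
  qed
  have dist: "m \<noteq> n \<Longrightarrow> mu q s1 t1 m \<noteq> mu q s1 t1 n" for m n
  proof (cases "m < n")
    case True then show ?thesis using mu_distinct[OF q A_def s1 A1] by blast
  next
    case False
    assume "m \<noteq> n"
    then have "n < m" using False by simp
    then show ?thesis using mu_distinct[OF q A_def s1 A1, of n m] by auto
  qed
  define u where "u = (\<lambda>j. (q*C)^j * (qpoch_inf (q*(q^j*a1)/a1) q / qpoch_inf ((q^j*a1)/a2) q))"
  note RO = real_orth[where \<mu>="mu q s1 t1", OF q a sigma2 Ceq qC eig dist P(2) u_def]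
  define K where "K = complex_of_real ((1-q)*a1) * exp (\<alpha> * complex_of_real (ln a1))"
  have K0: "K \<noteq> 0" using q a by (simp add: K_def)
  define Nn where "Nn n = (\<Sum>j. u j * poly (P n) (q^j*a1) * poly (P n) (q^j*a1))" for n
  show "\<exists>(P :: nat \<Rightarrow> real poly) (dsq :: nat \<Rightarrow> complex).
              (\<forall>n. degree (P n) = n) \<and>
              (\<forall>n. \<forall>x::real.
                  (s1 / 2) * x * (x - a1) * qD (1 / q) (qD q (poly (P n))) x
                  + (t1 * x + t0) * qD q (poly (P n)) x
                  + (- qnum q (int n) * (t1 + 1 / 2 * qnum (1 / q) (int n - 1) * s1)) * poly (P n) x = 0) \<and>
              (\<forall>n. dsq n \<noteq> 0) \<and>
              (\<forall>m n. qint_has q a1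
                  (\<lambda>x. complex_of_real (poly (P n) x * poly (P m) x)
                       * (exp (\<alpha> * complex_of_real (ln \<bar>x\<bar>))
                          * complex_of_real (qpoch_inf (q * x / a1) q / qpoch_inf (x / a2) q)))
                  (if m = n then dsq n else 0))"
  proof (intro exI[of _ P] exI[of _ "\<lambda>n. K * complex_of_real (Nn n)"] conjI allI)
    fix n show "degree (P n) = n" by (rule P(1))
  next
    fix n x
    show "(s1 / 2) * x * (x - a1) * qD (1 / q) (qD q (poly (P n))) x
                  + (t1 * x + t0) * qD q (poly (P n)) x
                  + (- qnum q (int n) * (t1 + 1 / 2 * qnum (1 / q) (int n - 1) * s1)) * poly (P n) x = 0"
      unfolding qD_poly[OF q1(1)] qD_poly[OF q1(2)] qnum_mu' using eig[of x n] by simp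
  next
    fix n show "K * complex_of_real (Nn n) \<noteq> 0" using K0 RO(2)[where n=n] by (simp add: Nn_def)
  next
    fix m n
    have hterm: "complex_of_real ((1 - q) * a1 * q ^ j) *
        (complex_of_real (poly (P n) (q^j*a1) * poly (P m) (q^j*a1))
           * (exp (\<alpha> * complex_of_real (ln \<bar>q^j*a1\<bar>))
              * complex_of_real (qpoch_inf (q * (q^j*a1) / a1) q / qpoch_inf ((q^j*a1) / a2) q)))
       = K * complex_of_real (u j * poly (P n) (q^j*a1) * poly (P m) (q^j*a1))" for j
    proof -
      have l: "ln \<bar>q^j*a1\<bar> = of_nat j * ln q + ln a1" using q a by (simp add: ln_mult ln_realpow)
      have e: "exp (\<alpha> * complex_of_real (ln \<bar>q^j*a1\<bar>)) = complex_of_real C ^ j * exp (\<alpha> * complex_of_real (ln a1))"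
      proof -
        have "\<alpha> * complex_of_real (ln \<bar>q^j*a1\<bar>) = of_nat j * (\<alpha> * complex_of_real (ln q)) + \<alpha> * complex_of_real (ln a1)"
          unfolding l by (simp add: algebra_simps)
        then show ?thesis by (simp add: exp_add exp_of_nat_mult hC)
      qed
      show ?thesis unfolding e K_def u_def by (simp add: power_mult_distrib mult_ac)
    qed
    have "(\<lambda>j. K * complex_of_real (u j * poly (P n) (q^j*a1) * poly (P m) (q^j*a1))) sums
          (K * complex_of_real (if m = n then Nn n else 0))"
    proof (rule sums_mult)
      show "(\<lambda>j. complex_of_real (u j * poly (P n) (q^j*a1) * poly (P m) (q^j*a1))) sums complex_of_real (if m = n then Nn n else 0)"
        unfolding sums_of_real_iff using RO(1)[where n=n and m=m] by (cases "m = n") (auto simp: Nn_def)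
    qed
    then show "qint_has q a1
                  (\<lambda>x. complex_of_real (poly (P n) x * poly (P m) x)
                       * (exp (\<alpha> * complex_of_real (ln \<bar>x\<bar>))
                          * complex_of_real (qpoch_inf (q * x / a1) q / qpoch_inf (x / a2) q)))
                  (if m = n then K * complex_of_real (Nn n) else 0)"
      unfolding qint_has_def hterm by (simp split: if_splits)
  qed
qed



end
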